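(* Let $(M,\sigma^M,\rho^M)$ be a ground module for the quantum wreath product $B\wr\mathcal{H}(d)$ (notation as in the context), with structure map $\tau^M:K\Sigma_d\otimes M^{\otimes d}\to M^{\otimes d}\otimes\widetilde{\mathcal{H}}^\chi_d$. If $\sigma^M_i$ is invertible for every $1\le i\le d-1$, then $\tau^M$ is invertible.
   Context: Let $K$ be a commutative ring and $B$ a unital associative $K$-algebra, free over $K$. Fix $d\ge2$, $S,R\in B\otimes B$, $K$-linear $\sigma,\rho$ on $B\otimes B$; $Z_i$ and $\phi_i$ denote $Z$ resp. $\phi$ placed/acting at tensor positions $i,i+1$ of $B^{\otimes d}$. $B\wr\mathcal{H}(d)$ is generated by $B^{\otimes d}$ and $H_1,\dots,H_{d-1}$ with braid relations, $H_i^2=S_iH_i+R_i$, $H_ib=\sigma_i(b)H_i+\rho_i(b)$; $H_w$ is defined via reduced expressions; it is assumed to have a PBW basis $\{(b_{j_1}\otimes\cdots\otimes b_{j_d})H_w\}$ for a $K$-basis $\{b_j\}$ of $B$. For $\chi(S),\chi(R)\in K$, $\widetilde{\mathcal{H}}^\chi_d$ is generated by $h_1,\dots,h_{d-1}$ with type A braid relations and $h_i^2=\chi(S)h_i+\chi(R)$. $M$ is a left $B$-module on whose square $M\otimes M$ the elements $S,R$ act by $\chi(S),\chi(R)$; $\sigma^M,\rho^M\in\mathrm{End}_K(M\otimes M)$, with $\sigma^M_i,\rho^M_i$ their actions on factors $i,i+1$ of $M^{\otimes d}$. $K\Sigma_d$ is the free $K$-module on $\Sigma_d$. For a choice map $r$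 (a reduced expression $r(w)$ for each $w$, with $r(1)$ empty and $r(w)=s_ir(x)$, $x=s_iw<w$), $\tau^M$ is defined recursively by $\tau^M(1\otimes m)=m\otimes1$, $\tau^M(s_i\otimes m)=\sigma^M_i(m)\otimes h_i+\rho^M_i(m)\otimes1$, and $\tau^M(w\otimes m)=\sum_y(\sigma^M_i(m_y)\otimes h_ih_y+\rho^M_i(m_y)\otimes h_y)$ where $r(w)=s_ir(x)$ and $\tau^M(x\otimes m)=\sum_ym_y\otimes h_y$. Ground module means: $\tau^M$ independent of $r$, and for all $w,x,b,m$: if $H_wb=\sum_gb_gH_g$ then $\tau^M(w\otimes bm)=\sum_g(b_g\otimes1)\tau^M(g\otimes m)$; if $H_wH_x=\sum_gc_gH_g$ and $\tau^M(x\otimes m)=\sum_ym_y\otimes h_y$ then $\sum_g(c_g\otimes1)\tau^M(g\otimes m)=\sum_y\tau^M(w\otimes m_y)(1\otimes h_y)$. *)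

theory Defs
  imports Main HOL.Modules "HOL-Combinatorics.Transposition" "HOL-Combinatorics.Permutations"
begin

definition Sd :: "nat \<Rightarrow> (nat \<Rightarrow> nat) set" where
  "Sd d = {w. w permutes {1..d}}"

definition sgen :: "nat \<Rightarrow> nat \<Rightarrow> nat" where
  "sgen i = transpose i (Suc i)"

definition perm_len :: "nat \<Rightarrow> (nat \<Rightarrow> nat) \<Rightarrow> nat" where
  "perm_len d w = card {(a, b). 1 \<le> a \<and> a < b \<and> b \<le> d \<and> w b < w a}"

definition word_perm :: "nat list \<Rightarrow> nat \<Rightarrow> nat" where
  "word_perm is = foldr (\<lambda>i w. sgen i \<circ> w) is id"

definition reduced_expr :: "nat \<Rightarrow> nat list \<Rightarrow> (nat \<Rightarrow> nat) \<Rightarrow> bool" where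
  "reduced_expr d is w \<longleftrightarrow> set is \<subseteq> {1..d-1} \<and> word_perm is = w \<and> length is = perm_len d w"

definition choice_map :: "nat \<Rightarrow> ((nat \<Rightarrow> nat) \<Rightarrow> nat list) \<Rightarrow> bool" where
  "choice_map d r \<longleftrightarrow> r id = [] \<and>
     (\<forall>w\<in>Sd d. reduced_expr d (r w) w \<and>
        (w \<noteq> id \<longrightarrow> r w \<noteq> [] \<and> r (sgen (hd (r w)) \<circ> w) = tl (r w)))"

(* Coefficient of h_w in h_i h_y in the algebra H~^chi_d with standard basis {h_w}
   (h_i^2 = cS h_i + cR, cS = chi(S), cR = chi(R)). *)
definition hcoef :: "nat \<Rightarrow> 'k::comm_ring_1 \<Rightarrow> 'k \<Rightarrow> nat \<Rightarrow> (nat \<Rightarrow> nat) \<Rightarrow> (nat \<Rightarrow> nat) \<Rightarrow> 'k" where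
  "hcoef d cS cR i y w =
     (if perm_len d y < perm_len d (sgen i \<circ> y)
      then (if w = sgen i \<circ> y then 1 else 0)
      else (if w = y then cS else 0) + (if w = sgen i \<circ> y then cR else 0))"

(* Elements of M^{(x)d} (x) H~^chi_d are represented as F :: Sigma_d => V,
   F = sum_y F(y) (x) h_y (V = M^{(x)d}); F vanishes outside Sigma_d.
   Lstep i is the K-linear map  m (x) h  |->  sigma_i(m) (x) h_i h + rho_i(m) (x) h. *)
definition Lstep :: "nat \<Rightarrow> ('k::comm_ring_1 \<Rightarrow> 'v::ab_group_add \<Rightarrow> 'v) \<Rightarrow> 'k \<Rightarrow> 'k
    \<Rightarrow> (nat \<Rightarrow> 'v \<Rightarrow> 'v) \<Rightarrow> (nat \<Rightarrow> 'v \<Rightarrow> 'v) \<Rightarrow> nat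
    \<Rightarrow> ((nat \<Rightarrow> nat) \<Rightarrow> 'v) \<Rightarrow> ((nat \<Rightarrow> nat) \<Rightarrow> 'v)" where
  "Lstep d scale cS cR sig rho i F =
     (\<lambda>w. if w \<in> Sd d
          then (\<Sum>y\<in>Sd d. scale (hcoef d cS cR i y w) (sig i (F y))) + rho i (F w)
          else 0)"

(* tau^M(w (x) m) computed along the word r(w): m (x) 1 for the empty word,
   tau(s_i r(x)) = Lstep i (tau(r(x))). *)
definition tau_word :: "nat \<Rightarrow> ('k::comm_ring_1 \<Rightarrow> 'v::ab_group_add \<Rightarrow> 'v) \<Rightarrow> 'k \<Rightarrow> 'k
    \<Rightarrow> (nat \<Rightarrow> 'v \<Rightarrow> 'v) \<Rightarrow> (nat \<Rightarrow> 'v \<Rightarrow> 'v) \<Rightarrow> nat list \<Rightarrow> 'v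
    \<Rightarrow> ((nat \<Rightarrow> nat) \<Rightarrow> 'v)" where
  "tau_word d scale cS cR sig rho is m =
     foldr (Lstep d scale cS cR sig rho) is (\<lambda>w. if w = id then m else 0)"

(* Elements of K Sigma_d (x) M^{(x)d} are represented as f :: Sigma_d => V,
   f = sum_w w (x) f(w); tau^M is the K-linear extension. *)
definition tauM :: "nat \<Rightarrow> ('k::comm_ring_1 \<Rightarrow> 'v::ab_group_add \<Rightarrow> 'v) \<Rightarrow> 'k \<Rightarrow> 'k
    \<Rightarrow> (nat \<Rightarrow> 'v \<Rightarrow> 'v) \<Rightarrow> (nat \<Rightarrow> 'v \<Rightarrow> 'v) \<Rightarrow> ((nat \<Rightarrow> nat) \<Rightarrow> nat list)
    \<Rightarrow> ((nat \<Rightarrow> nat) \<Rightarrow> 'v) \<Rightarrow> ((nat \<Rightarrow> nat) \<Rightarrow> 'v)" where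
  "tauM d scale cS cR sig rho r f =
     (\<lambda>v. \<Sum>w\<in>Sd d. tau_word d scale cS cR sig rho (r w) (f w) v)"

definition fdom :: "nat \<Rightarrow> ((nat \<Rightarrow> nat) \<Rightarrow> 'v::zero) set" where
  "fdom d = {F. \<forall>w. w \<notin> Sd d \<longrightarrow> F w = 0}"

end

theory Submission
  imports Defs
begin


lemma sgen_permutes: "1 \<le> i \<Longrightarrow> i \<le> d - 1 \<Longrightarrow> sgen i permutes {1..d}"
  unfolding sgen_def by (rule permutes_swap_id) auto

lemma sgen_invol: "sgen i \<circ> (sgen i \<circ> x) = x"
  unfolding sgen_def by (simp add: comp_assoc[symmetric])

lemma word_perm_Cons: "word_perm (i # js) = sgen i \<circ> word_perm js"
  by (simp add: word_perm_def)

lemma word_perm_Sd: "set is \<subseteq> {1..d-1} \<Longrightarrow> word_perm is \<in> Sd d"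
proof (induction "is")
  case Nil
  have "(id::nat\<Rightarrow>nat) permutes {1..d}" by (rule permutes_id)
  then show ?case by (simp add: word_perm_def Sd_def id_def)
next
  case (Cons i js)
  then have "word_perm js permutes {1..d}" by (auto simp: Sd_def)
  moreover have "sgen i permutes {1..d}" using Cons.prems by (intro sgen_permutes) auto
  ultimately have "word_perm js permutes {1..d}" "sgen i permutes {1..d}" .
  then show ?case unfolding word_perm_Cons Sd_def
    using permutes_compose by blast
qed

lemma perm_len_id: "perm_len d id = 0"
proof -
  have "{(a, b). 1 \<le> a \<and> a < b \<and> b \<le> d \<and> id b < id a} = {}" by auto
  then show ?thesis unfolding perm_len_def by (simp only: card.empty)
qed

lemma perm_len_bound: "perm_len d v \<le> d * d"
proof -
  have "{(a, b). 1 \<le> a \<and> a < b \<and> b \<le> d \<and> v b < v a} \<subseteq> {1..d} \<times> {1..d}" by auto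
  then have "perm_len d v \<le> card ({1..d} \<times> {1..d})"
    unfolding perm_len_def by (intro card_mono) auto
  then show ?thesis by (simp add: card_cartesian_product)
qed

lemma perm_len_sgen: 
  assumes y: "y permutes {1..d}"
  shows "perm_len d (sgen i \<circ> y) \<le> perm_len d y + 1"
proof -
  let ?A = "{(a, b). 1 \<le> a \<and> a < b \<and> b \<le> d \<and> (sgen i \<circ> y) b < (sgen i \<circ> y) a}"
  let ?B = "{(a, b). 1 \<le> a \<and> a < b \<and> b \<le> d \<and> y b < y a}"
  have fin: "finite ?B"
    by (rule finite_subset[of _ "{1..d} \<times> {1..d}"]) auto
  have sub: "?A \<subseteq> insert (inv y i, inv y (Suc i)) ?B"
  proof
    fix p assume "p \<in> ?A"
    then obtain a b where p: "p = (a, b)" "1 \<le> a" "a < b" "b \<le> d"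
        and lt: "sgen i (y b) < sgen i (y a)" by auto
    have inj: "inj y" using y by (rule permutes_inj)
    have "y a \<noteq> y b" using inj p(3) by (metis injD less_irrefl)
    show "p \<in> insert (inv y i, inv y (Suc i)) ?B"
    proof (cases "y b < y a")
      case True then show ?thesis using p by auto
    next
      case False
      with \<open>y a \<noteq> y b\<close> have "y a < y b" by simp
      with lt have "y a = i \<and> y b = Suc i"
        unfolding sgen_def transpose_def by (auto split: if_splits)
      then have "a = inv y i" "b = inv y (Suc i)"
        using inj by (metis inv_f_f)+
      then show ?thesis using p by simp
    qed
  qed
  have "perm_len d (sgen i \<circ> y) \<le> card (insert (inv y i, inv y (Suc i)) ?B)"
    unfolding perm_len_def using fin sub by (intro card_mono) auto
  also have "\<dots> \<le> card ?B + 1" using fin by (simp add: card_insert_if)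
  finally show ?thesis unfolding perm_len_def .
qed

lemma perm_len_word_nil: "perm_len d (word_perm []) = 0"
  using perm_len_id by (simp add: word_perm_def)

lemma perm_len_word: "set is \<subseteq> {1..d-1} \<Longrightarrow> perm_len d (word_perm is) \<le> length is"
proof (induction "is")
  case Nil
  then show ?case using perm_len_word_nil by simp
next
  case (Cons i js)
  then have "word_perm js permutes {1..d}" using word_perm_Sd[of js d] by (auto simp: Sd_def)
  then have "perm_len d (sgen i \<circ> word_perm js) \<le> perm_len d (word_perm js) + 1"
    by (rule perm_len_sgen)
  moreover have "perm_len d (word_perm js) \<le> length js" using Cons by simp
  ultimately show ?case unfolding word_perm_Cons by (simp only: length_Cons)
qed



locale twctx =
  fixes scale :: "'k::comm_ring_1 \<Rightarrow> 'v::ab_group_add \<Rightarrow> 'v"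
    and d :: nat and cS cR :: 'k
    and sig rho :: "nat \<Rightarrow> 'v \<Rightarrow> 'v"
  assumes md: "module scale"
    and hom: "\<forall>i\<in>{1..d-1}. module_hom scale scale (sig i) \<and> module_hom scale scale (rho i)"
begin

abbreviation "TW \<equiv> tau_word d scale cS cR sig rho"
abbreviation "LS \<equiv> Lstep d scale cS cR sig rho"
abbreviation "len \<equiv> perm_len d"

lemma sc0l[simp]: "scale 0 x = 0" using md by (rule module.scale_zero_left)
lemma sc0r[simp]: "scale c 0 = 0" using md by (rule module.scale_zero_right)
lemma sc1[simp]: "scale 1 x = x" using md by (rule module.scale_one)
lemma scdiff: "scale c (x - y) = scale c x - scale c y"
  using md by (rule module.scale_right_diff_distrib)

lemma sig0: "i \<in> {1..d-1} \<Longrightarrow> sig i 0 = 0"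
  using hom module_hom.zero by blast
lemma rho0: "i \<in> {1..d-1} \<Longrightarrow> rho i 0 = 0"
  using hom module_hom.zero by blast
lemma sigdiff: "i \<in> {1..d-1} \<Longrightarrow> sig i (x - y) = sig i x - sig i y"
  using hom module_hom.diff by blast
lemma rhodiff: "i \<in> {1..d-1} \<Longrightarrow> rho i (x - y) = rho i x - rho i y"
  using hom module_hom.diff by blast

lemma TW_Nil: "TW [] m = (\<lambda>w. if w = id then m else 0)"
  by (simp add: tau_word_def)
lemma TW_Cons: "TW (i # js) m = LS i (TW js m)"
  by (simp add: tau_word_def)

lemma LS_diff: "i \<in> {1..d-1} \<Longrightarrow> LS i (\<lambda>y. F y - G y) v = LS i F v - LS i G v"
  by (simp add: Lstep_def sigdiff rhodiff scdiff sum_subtractf)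

lemma TW_diff: "set is \<subseteq> {1..d-1} \<Longrightarrow> TW is (a - b) v = TW is a v - TW is b v"
proof (induction "is" arbitrary: v)
  case Nil
  then show ?case by (auto simp: TW_Nil)
next
  case (Cons i js)
  then have "TW js (a - b) = (\<lambda>y. TW js a y - TW js b y)" by auto
  then show ?case using Cons.prems by (simp add: TW_Cons LS_diff)
qed

lemma TW_zero: "set is \<subseteq> {1..d-1} \<Longrightarrow> TW is 0 v = 0"
  using TW_diff[of "is" 0 0] by simp

lemma TW_support: "set is \<subseteq> {1..d-1} \<Longrightarrow> TW is m v \<noteq> 0 \<Longrightarrow> v \<in> Sd d \<and> len v \<le> length is"
proof (induction "is" arbitrary: v)
  case Nil
  then have "v = id" by (auto simp: TW_Nil split: if_splits)
  have "(id::nat\<Rightarrow>nat) permutes {1..d}" by (rule permutes_id)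
  then show ?case using \<open>v = id\<close> perm_len_id[of d] by (simp add: Sd_def id_def)
next
  case (Cons i js)
  let ?F = "TW js m"
  have i: "i \<in> {1..d-1}" and js: "set js \<subseteq> {1..d-1}" using Cons.prems by auto
  have ne: "LS i ?F v \<noteq> 0" using Cons.prems by (simp add: TW_Cons)
  then have vS: "v \<in> Sd d" unfolding Lstep_def by (auto split: if_splits)
  from ne vS have "(\<Sum>y\<in>Sd d. scale (hcoef d cS cR i y v) (sig i (?F y))) + rho i (?F v) \<noteq> 0"
    by (simp add: Lstep_def)
  then consider "rho i (?F v) \<noteq> 0" | "(\<Sum>y\<in>Sd d. scale (hcoef d cS cR i y v) (sig i (?F y))) \<noteq> 0"
    by force
  then have "len v \<le> length js + 1"
  proof cases
    case 1
    then have "?F v \<noteq> 0" using rho0[OF i] by auto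
    then show ?thesis using Cons.IH[OF js] by fastforce
  next
    case 2
    then obtain y where y: "y \<in> Sd d" "scale (hcoef d cS cR i y v) (sig i (?F y)) \<noteq> 0"
      by (meson sum.neutral)
    then have Fy: "?F y \<noteq> 0" using sig0[OF i] by auto
    have hc: "hcoef d cS cR i y v \<noteq> 0" using y(2) by auto
    then have vy: "v = y \<or> v = sgen i \<circ> y" unfolding hcoef_def by (auto split: if_splits)
    have ly: "len y \<le> length js" using Cons.IH[OF js Fy] by auto
    have "y permutes {1..d}" using y(1) by (simp add: Sd_def)
    then have "len (sgen i \<circ> y) \<le> len y + 1" by (rule perm_len_sgen)
    then show ?thesis using vy ly by auto
  qed
  then show ?case using vS by simp
qed

lemma TW_lead:
  assumes "set is \<subseteq> {1..d-1}" and "len (word_perm is) = length is" and "len v = length is"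
  shows "TW is m v = (if v = word_perm is then foldr sig is m else 0)"
  using assms
proof (induction "is" arbitrary: v)
  case Nil
  then show ?case by (simp add: TW_Nil word_perm_def id_def)
next
  case (Cons i js)
  let ?F = "TW js m"
  define x where "x = word_perm js"
  define w where "w = sgen i \<circ> x"
  have wdef: "word_perm (i # js) = w" by (simp add: w_def x_def word_perm_Cons)
  have i: "i \<in> {1..d-1}" and js: "set js \<subseteq> {1..d-1}" using Cons.prems by auto
  have xS: "x \<in> Sd d" unfolding x_def using js by (rule word_perm_Sd)
  have wS: "w \<in> Sd d" unfolding wdef[symmetric] using Cons.prems(1) by (rule word_perm_Sd)
  have lx1: "len x \<le> length js" unfolding x_def using js by (rule perm_len_word)
  have lw: "len w = length js + 1" using Cons.prems(2) wdef by simp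
  have "len w \<le> len x + 1" unfolding w_def using xS by (intro perm_len_sgen) (simp add: Sd_def)
  then have lx: "len x = length js" using lx1 lw by simp
  have IH: "\<And>u. len u = length js \<Longrightarrow> ?F u = (if u = x then foldr sig js m else 0)"
    using Cons.IH[OF js] lx x_def by simp
  have lv: "len v = length js + 1" using Cons.prems(3) by simp
  show ?case
  proof (cases "v \<in> Sd d")
    case False
    then have "v \<noteq> w" using wS by auto
    then show ?thesis using False by (simp add: TW_Cons wdef Lstep_def)
  next
    case vS: True
    have Fv: "?F v = 0" using TW_support[OF js, of m v] lv by auto
    have rest: "(\<Sum>y\<in>Sd d - {x}. scale (hcoef d cS cR i y v) (sig i (?F y))) = 0"
    proof (rule sum.neutral, rule ballI)
      fix y assume y: "y \<in> Sd d - {x}"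
      show "scale (hcoef d cS cR i y v) (sig i (?F y)) = 0"
      proof (cases "?F y = 0")
        case True then show ?thesis using sig0[OF i] by simp
      next
        case False
        then have "len y \<le> length js" using TW_support[OF js] by blast
        moreover have "len y \<noteq> length js" using IH[of y] y False by auto
        ultimately have lt: "len y < length js" by simp
        have "y permutes {1..d}" using y by (simp add: Sd_def)
        then have "len (sgen i \<circ> y) \<le> len y + 1" by (rule perm_len_sgen)
        then have "v \<noteq> y" "v \<noteq> sgen i \<circ> y" using lt lv by auto
        then have "hcoef d cS cR i y v = 0" unfolding hcoef_def by simp
        then show ?thesis by simp
      qed
    qed
    have hx: "hcoef d cS cR i x v = (if v = w then 1 else 0)"
      unfolding hcoef_def using lx lw w_def by auto
    have "TW (i # js) m v = (\<Sum>y\<in>Sd d. scale (hcoef d cS cR i y v) (sig i (?F y))) + rho i (?F v)"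
      using vS by (simp add: TW_Cons Lstep_def)
    also have "\<dots> = scale (hcoef d cS cR i x v) (sig i (?F x))
        + (\<Sum>y\<in>Sd d - {x}. scale (hcoef d cS cR i y v) (sig i (?F y)))"
      using Fv rho0[OF i] xS
      by (simp add: sum.remove[OF finite_subset[OF _ finite_permutations[of "{1..d}"]]] Sd_def)
    also have "\<dots> = (if v = w then sig i (foldr sig js m) else 0)"
      using rest hx IH[of x] lx by simp
    finally show ?thesis using wdef by simp
  qed
qed

end



locale twctx2 = twctx scale d cS cR sig rho
  for scale :: "'k::comm_ring_1 \<Rightarrow> 'v::ab_group_add \<Rightarrow> 'v"
    and d :: nat and cS cR :: 'k
    and sig rho :: "nat \<Rightarrow> 'v \<Rightarrow> 'v" +
  fixes r :: "(nat \<Rightarrow> nat) \<Rightarrow> nat list"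
  assumes cm: "choice_map d r"
    and sbij: "\<forall>i\<in>{1..d-1}. bij (sig i)"
begin

abbreviation "T \<equiv> tauM d scale cS cR sig rho r"

lemma finSd: "finite (Sd d)"
  unfolding Sd_def by (rule finite_permutations) simp

lemma r_set: "u \<in> Sd d \<Longrightarrow> set (r u) \<subseteq> {1..d-1}"
  using cm by (auto simp: choice_map_def reduced_expr_def)
lemma r_word: "u \<in> Sd d \<Longrightarrow> word_perm (r u) = u"
  using cm by (auto simp: choice_map_def reduced_expr_def)
lemma r_len: "u \<in> Sd d \<Longrightarrow> length (r u) = len u"
  using cm by (auto simp: choice_map_def reduced_expr_def)

lemma sigs_bij: "set is \<subseteq> {1..d-1} \<Longrightarrow> bij (foldr sig is)"
proof (induction "is")
  case Nil then show ?case using bij_id by (simp add: id_def)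
next
  case (Cons i js)
  then have "bij (sig i)" using sbij by auto
  moreover have "bij (foldr sig js)" using Cons by simp
  ultimately show ?case unfolding foldr_Cons by (rule bij_comp[rotated])
qed

lemma sigs_zero: "set is \<subseteq> {1..d-1} \<Longrightarrow> foldr sig is 0 = 0"
  by (induction "is") (auto simp: sig0)

lemma T_diff: "T (\<lambda>w. f w - g w) v = T f v - T g v"
  unfolding tauM_def sum_subtractf[symmetric]
  by (rule sum.cong) (auto simp: TW_diff[OF r_set])

lemma T_fdom: "T f \<in> fdom d"
  unfolding fdom_def tauM_def
proof (intro CollectI allI impI sum.neutral ballI)
  fix v w assume "v \<notin> Sd d" "w \<in> Sd d"
  then show "TW (r w) (f w) v = 0" using TW_support[OF r_set[of w]] by blast
qed

lemma T_key:
  assumes vS: "v \<in> Sd d" and sup: "\<forall>u\<in>Sd d. f u \<noteq> 0 \<longrightarrow> len u \<le> len v"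
  shows "T f v = foldr sig (r v) (f v)"
proof -
  have rest: "(\<Sum>u\<in>Sd d - {v}. TW (r u) (f u) v) = 0"
  proof (rule sum.neutral, rule ballI)
    fix u assume u: "u \<in> Sd d - {v}"
    then have uS: "u \<in> Sd d" by simp
    show "TW (r u) (f u) v = 0"
    proof (cases "f u = 0")
      case True then show ?thesis using TW_zero[OF r_set[OF uS]] by simp
    next
      case False
      then have le: "len u \<le> len v" using sup uS by blast
      show ?thesis
      proof (cases "len u < len v")
        case True
        show ?thesis
        proof (rule ccontr)
          assume "TW (r u) (f u) v \<noteq> 0"
          then have "len v \<le> length (r u)" using TW_support[OF r_set[OF uS]] by blast
          then show False using True r_len[OF uS] by simp
        qed
      next
        case False
        then have lv: "len v = length (r u)" using le r_len[OF uS] by simp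
        have lw: "len (word_perm (r u)) = length (r u)" using r_word[OF uS] r_len[OF uS] by simp
        have "v \<noteq> word_perm (r u)"
        proof
          assume "v = word_perm (r u)"
          then have "v = u" using r_word[OF uS] by simp
          then show False using u by simp
        qed
        then show ?thesis using TW_lead[OF r_set[OF uS] lw lv, of "f u"] by simp
      qed
    qed
  qed
  have "T f v = TW (r v) (f v) v + (\<Sum>u\<in>Sd d - {v}. TW (r u) (f u) v)"
    unfolding tauM_def by (rule sum.remove[OF finSd vS])
  also have "\<dots> = foldr sig (r v) (f v)"
  proof -
    have lw: "len (word_perm (r v)) = length (r v)" using r_word[OF vS] r_len[OF vS] by simp
    have lv: "len v = length (r v)" using r_len[OF vS] by simp
    show ?thesis using rest TW_lead[OF r_set[OF vS] lw lv, of "f v"] r_word[OF vS] by simp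
  qed
  finally show ?thesis .
qed

lemma T_inj: "inj_on T (fdom d)"
proof (rule inj_onI)
  fix f g assume f: "f \<in> fdom d" and g: "g \<in> fdom d" and eq: "T f = T g"
  define h where "h = (\<lambda>w. f w - g w)"
  have Th: "T h v = 0" for v using eq unfolding h_def T_diff by simp
  have hz: "h u = 0" for u
  proof (rule ccontr)
    assume hu: "h u \<noteq> 0"
    let ?S = "{u\<in>Sd d. h u \<noteq> 0}"
    have uS: "u \<in> Sd d"
    proof (rule ccontr)
      assume "u \<notin> Sd d"
      then have "f u = 0" "g u = 0" using f g unfolding fdom_def by auto
      then show False using hu unfolding h_def by simp
    qed
    have fin: "finite (len ` ?S)" using finSd by simp
    have ne: "len ` ?S \<noteq> {}" using uS hu by auto
    obtain w where w: "w \<in> ?S" "len w = Max (len ` ?S)"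
      using Max_in[OF fin ne] by auto
    have sup: "\<forall>u\<in>Sd d. h u \<noteq> 0 \<longrightarrow> len u \<le> len w"
      using w(2) fin by auto
    have "foldr sig (r w) (h w) = 0" using T_key[of w h] w sup Th by simp
    moreover have "foldr sig (r w) 0 = 0" using sigs_zero[OF r_set] w by simp
    moreover have "inj (foldr sig (r w))" using sigs_bij[OF r_set] w bij_is_inj by auto
    ultimately have "h w = 0" by (metis injD)
    then show False using w by simp
  qed
  show "f = g"
  proof
    fix x show "f x = g x" using hz[of x] unfolding h_def by simp
  qed
qed

lemma T_surj_aux:
  "\<forall>G\<in>fdom d. (\<forall>v. G v \<noteq> 0 \<longrightarrow> len v < n) \<longrightarrow> (\<exists>f\<in>fdom d. T f = G)"
proof (induction n)
  case 0
  show ?case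
  proof (intro ballI impI)
    fix G :: "(nat \<Rightarrow> nat) \<Rightarrow> 'v" assume "\<forall>v. G v \<noteq> 0 \<longrightarrow> len v < 0"
    then have G0: "G = (\<lambda>v. 0)" by auto
    have "T (\<lambda>v. 0) = (\<lambda>v. 0)"
      unfolding tauM_def using TW_zero r_set by (auto intro!: ext sum.neutral)
    moreover have "(\<lambda>v. 0) \<in> fdom d" by (simp add: fdom_def)
    ultimately show "\<exists>f\<in>fdom d. T f = G" using G0 by auto
  qed
next
  case (Suc n)
  show ?case
  proof (intro ballI impI)
    fix G :: "(nat \<Rightarrow> nat) \<Rightarrow> 'v" assume G: "G \<in> fdom d" and Gs: "\<forall>v. G v \<noteq> 0 \<longrightarrow> len v < Suc n"
    define f where "f = (\<lambda>w. if w \<in> Sd d \<and> len w = n then (SOME m. foldr sig (r w) m = G w) else 0)"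
    have ffd: "f \<in> fdom d" by (simp add: f_def fdom_def)
    have fsup: "\<forall>u\<in>Sd d. f u \<noteq> 0 \<longrightarrow> len u = n" by (simp add: f_def)
    define H where "H = (\<lambda>v. G v - T f v)"
    have Hfd: "H \<in> fdom d" using G T_fdom[of f] by (simp add: H_def fdom_def)
    have Hs: "\<forall>v. H v \<noteq> 0 \<longrightarrow> len v < n"
    proof (intro allI impI)
      fix v assume Hv: "H v \<noteq> 0"
      then have vS: "v \<in> Sd d" using Hfd by (auto simp: fdom_def)
      show "len v < n"
      proof (rule ccontr)
        assume "\<not> len v < n"
        then have ge: "len v \<ge> n" by simp
        have Tv: "T f v = foldr sig (r v) (f v)"
          using T_key[OF vS] fsup ge by auto
        show False
        proof (cases "len v = n")
          case True
          have "surj (foldr sig (r v))" using sigs_bij[OF r_set[OF vS]] bij_is_surj by auto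
          then have "\<exists>m. foldr sig (r v) m = G v" by (metis surj_def)
          then have "foldr sig (r v) (SOME m. foldr sig (r v) m = G v) = G v" by (rule someI_ex)
          then have "foldr sig (r v) (f v) = G v" using vS True unfolding f_def by simp
          then show False using Hv Tv by (simp add: H_def)
        next
          case False
          then have "f v = 0" "G v = 0" using Gs ge by (auto simp: f_def)
          then show False using Hv Tv sigs_zero[OF r_set[OF vS]] by (simp add: H_def)
        qed
      qed
    qed
    obtain f' where f': "f' \<in> fdom d" "T f' = H" using Suc.IH Hfd Hs by blast
    define g where "g = (\<lambda>w. f w + f' w)"
    have gfd: "g \<in> fdom d" using ffd f' by (simp add: g_def fdom_def)
    have "T g v = G v" for v
    proof -
      have "T f' v = T g v - T f v"
        using T_diff[of g f v] by (simp add: g_def)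
      then show ?thesis using f'(2) by (simp add: H_def)
    qed
    then show "\<exists>f\<in>fdom d. T f = G" using gfd by auto
  qed
qed

lemma T_bij: "bij_betw T (fdom d) (fdom d)"
proof (rule bij_betw_imageI)
  show "inj_on T (fdom d)" by (rule T_inj)
  show "T ` fdom d = fdom d"
  proof
    show "T ` fdom d \<subseteq> fdom d" using T_fdom by auto
    show "fdom d \<subseteq> T ` fdom d"
    proof
      fix G :: "(nat \<Rightarrow> nat) \<Rightarrow> 'v" assume G: "G \<in> fdom d"
      have "\<forall>v. G v \<noteq> 0 \<longrightarrow> len v < d * d + 1" using perm_len_bound[of d] by (simp add: le_imp_less_Suc)
      then obtain f where "f \<in> fdom d" "T f = G" using T_surj_aux G by blast
      then show "G \<in> T ` fdom d" by auto
    qed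
  qed
qed

end


theorem lemma5p2:
  fixes scale :: "'k::comm_ring_1 \<Rightarrow> 'v::ab_group_add \<Rightarrow> 'v"
    and d :: nat and cS cR :: 'k
    and sig rho :: "nat \<Rightarrow> 'v \<Rightarrow> 'v"
    and r :: "(nat \<Rightarrow> nat) \<Rightarrow> nat list"
  assumes "module scale"
    and "d \<ge> 2"
    and "\<forall>i\<in>{1..d-1}. module_hom scale scale (sig i) \<and> module_hom scale scale (rho i)"
    and "choice_map d r"
    and "\<forall>r'. choice_map d r' \<longrightarrow> tauM d scale cS cR sig rho r' = tauM d scale cS cR sig rho r"
    and "\<forall>i\<in>{1..d-1}. bij (sig i)"
  shows "bij_betw (tauM d scale cS cR sig rho r) (fdom d) (fdom d)"
proof -
  have "twctx2 scale d sig rho r"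
    unfolding twctx2_def twctx_def twctx2_axioms_def using assms by blast
  then interpret twctx2 scale d cS cR sig rho r by (simp add: twctx2_def)
  show ?thesis by (rule T_bij)
qed

end
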